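(* Fix a constant $f\in\mathbb{N}$ and let $\ell=f+1$. Consider directed graphs $G=(V,E)$ with $n=|V|\to\infty$, each with a partition $R_1,\dots,R_k$ of $V$, and let $R=\max_{k'\in[k]}|R_{k'}|$ and $r=\min_{k'\in[k]}|R_{k'}|$. Consider the partitioned omission reinforcement (described in the context) under the fault model $\mathrm{Om}(p)$, $p=p(n)$. (i) If $p\in o\big((n/r)^{-1/(f+1)}/R\big)$, the construction is a valid reinforcement for $\mathrm{Om}(p)$, i.e., with probability $1-o(1)$, $A'$ simulates $A$. (ii) If $G$ contains $\Omega(n)$ nodes with non-zero out-degree, $R\in O(1)$, and $p\in\omega(n^{-1/(f+1)})$, the reinforcement is not valid: there exist a scheduling algorithm $A$, inputs and omission behavior such that with probability $1-o(1)$, $A'$ does not simulate $A$.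
   Context: Model: a synchronous network is a directed graph $G=(V,E)$ with $n=|V|$. A scheduling algorithm $A$ assigns a state to each node; in each round each node may receive environment input, decides from its state which message (if any) to send on each outgoing link, and updates its state from messages received on incoming links. Write $[\ell]=\{1,\dots,\ell\}$. Fault model $\mathrm{Om}(p)$: the set $F'$ of faulty nodes of $G'$ is obtained by including each node independently with probability $p$; faulty nodes may only omit sending messages they should send. Partitioned omission reinforcement: $V'=V\times[\ell]$, $v_i=(v,i)$, $P(v_i)=v$. For $e=(v,w)\in E$, $E'_e=\{(v_i,w_i): i\in[\ell]\}$ if $v,w$ are in the same region, and $E'_e=\{(v_i,w_j): i,j\in[\ell]\}$ otherwise; $E'=\bigcup_e E'_e$. Each copy receives the environment input of its original. Algorithm $A'$: each $v'$ initializes local copies of the state of $P(v')$ and sets $\mathit{know}_{v'}=\mathbf{true}$; in each round, on each $(v',w')\in E'$, if $\mathit{know}_{v'}=\mathbf{true}$ it sends the message $P(v')$ would send on $(P(v'),P(w'))$ under $A$, or a symbol $\bot$ if there is none, and sends nothing if $\mathit{know}_{v'}=\mathbf{false}$; if $\mathit{know}_{v'}=\mathbf{true}$ and for every in-neighbor $w$ of $P(v')$ it received a message from some copy of $w$, it updates its state accordingly ($\bot$ meaning no message), and otherwise sets $\mathit{know}_{v'}=\mathbf{false}$. Simulation under $\mathrm{Om}(p)$: for each $v\in V$, some copy $v'$ with $P(v')=v$ computes in each round the state of $v$ under $A$. A reinforcement is valid if $A'$ simulates $A$ with probability $1-o(1)$ as $n\to\infty$. *)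

theory Defs
  imports "HOL-Analysis.Analysis" "HOL-Library.Landau_Symbols" "HOL-Library.Disjoint_Sets"
begin

text \<open>In every round a node first incorporates its environment input,
 then decides from its (new) state which message (if any) to send on each outgoing link
 (identified by its target), and finally updates its state from the messages received on its
 incoming links (indexed by the in-neighbour; None = no message).\<close>
record ('v,'s,'m,'i) alg =
  a_init   :: "'v \<Rightarrow> 's"
  a_input  :: "'v \<Rightarrow> 's \<Rightarrow> 'i \<Rightarrow> 's"
  a_send   :: "'v \<Rightarrow> 's \<Rightarrow> 'v \<Rightarrow> 'm option"
  a_update :: "'v \<Rightarrow> 's \<Rightarrow> ('v \<Rightarrow> 'm option) \<Rightarrow> 's"

text \<open>Fault-free execution of A on the graph with edge set E; env t v is the input of v in
 round t+1; run A E env t v is the state of v after t rounds.\<close>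
primrec run :: "('v,'s,'m,'i) alg \<Rightarrow> ('v \<times> 'v) set \<Rightarrow> (nat \<Rightarrow> 'v \<Rightarrow> 'i) \<Rightarrow> nat \<Rightarrow> 'v \<Rightarrow> 's" where
  "run A E env 0 v = a_init A v"
| "run A E env (Suc t) v =
     (let x = (\<lambda>u. a_input A u (run A E env t u) (env t u))
      in a_update A v (x v) (\<lambda>u. if (u, v) \<in> E then a_send A u (x u) v else None))"

definition graph_part :: "'v set \<Rightarrow> ('v \<times> 'v) set \<Rightarrow> 'v set set \<Rightarrow> bool" where
  "graph_part V E P \<longleftrightarrow> finite V \<and> E \<subseteq> V \<times> V \<and> partition_on V P"

definition max_region :: "'v set set \<Rightarrow> nat" where
  "max_region P = Max (card ` P)"

definition min_region :: "'v set set \<Rightarrow> nat" where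
  "min_region P = Min (card ` P)"

definition same_region :: "'v set set \<Rightarrow> 'v \<Rightarrow> 'v \<Rightarrow> bool" where
  "same_region P v w \<longleftrightarrow> (\<exists>X\<in>P. v \<in> X \<and> w \<in> X)"

definition reinf_edges :: "('v \<times> 'v) set \<Rightarrow> 'v set set \<Rightarrow> nat \<Rightarrow> (('v \<times> nat) \<times> ('v \<times> nat)) set" where
  "reinf_edges E P l = {((v, i), (w, j)) | v w i j. (v, w) \<in> E \<and> i \<in> {1..l} \<and> j \<in> {1..l}
                                              \<and> (same_region P v w \<longrightarrow> i = j)}"

text \<open>Execution of A' on the reinforced graph, with faulty set F and omission behaviour om:
 a faulty copy d omits its message on link (d,c) in round t+1 iff om t d c.
 The state of a copy is (local copy of the state of its original, know flag).
 Messages of A' are of type 'm option, None playing the role of the symbol bot.\<close>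
primrec run' :: "('v,'s,'m,'i) alg \<Rightarrow> ('v \<times> 'v) set \<Rightarrow> 'v set set \<Rightarrow> nat \<Rightarrow> (nat \<Rightarrow> 'v \<Rightarrow> 'i)
                 \<Rightarrow> ('v \<times> nat) set \<Rightarrow> (nat \<Rightarrow> 'v \<times> nat \<Rightarrow> 'v \<times> nat \<Rightarrow> bool)
                 \<Rightarrow> nat \<Rightarrow> 'v \<times> nat \<Rightarrow> 's \<times> bool" where
  "run' A E P l env F om 0 c = (a_init A (fst c), True)"
| "run' A E P l env F om (Suc t) c =
     (let st = (\<lambda>d. run' A E P l env F om t d);
          x = (\<lambda>d. a_input A (fst d) (fst (st d)) (env t (fst d)));
          delivered = (\<lambda>d. (d, c) \<in> reinf_edges E P l \<and> snd (st d) \<and> \<not> (d \<in> F \<and> om t d c));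
          msg = (\<lambda>d. a_send A (fst d) (x d) (fst c))
      in if snd (st c) \<and> (\<forall>u. (u, fst c) \<in> E \<longrightarrow> (\<exists>d. fst d = u \<and> delivered d))
         then (a_update A (fst c) (x c)
                 (\<lambda>u. if (u, fst c) \<in> E then msg (SOME d. fst d = u \<and> delivered d) else None), True)
         else (x c, False))"

definition simulates :: "('v,'s,'m,'i) alg \<Rightarrow> 'v set \<Rightarrow> ('v \<times> 'v) set \<Rightarrow> 'v set set \<Rightarrow> nat
                         \<Rightarrow> (nat \<Rightarrow> 'v \<Rightarrow> 'i) \<Rightarrow> ('v \<times> nat) set
                         \<Rightarrow> (nat \<Rightarrow> 'v \<times> nat \<Rightarrow> 'v \<times> nat \<Rightarrow> bool) \<Rightarrow> bool" where
  "simulates A V E P l env F om \<longleftrightarrow>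
     (\<forall>v\<in>V. \<exists>i\<in>{1..l}. \<forall>t. snd (run' A E P l env F om t (v, i))
                              \<and> fst (run' A E P l env F om t (v, i)) = run A E env t v)"

text \<open>Om(p): probability that the random faulty set F \<subseteq> V', each node included independently
 with probability p, satisfies Q.\<close>
definition om_prob :: "'a set \<Rightarrow> real \<Rightarrow> ('a set \<Rightarrow> bool) \<Rightarrow> real" where
  "om_prob V' p Q = (\<Sum>F\<in>Pow V'. if Q F then p ^ card F * (1 - p) ^ (card V' - card F) else 0)"

end

theory Submission
  imports Defs
begin


lemma om_prob_cong:
  assumes "\<And>F. F \<subseteq> V' \<Longrightarrow> Q F = Q' F"
  shows "om_prob V' p Q = om_prob V' p Q'"
  unfolding om_prob_def by (rule sum.cong) (auto simp: assms)

lemma om_prob_split: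
  assumes A: "finite A" and B: "finite B" and D: "A \<inter> B = {}"
  shows "om_prob (A \<union> B) p (\<lambda>F. Q1 (F \<inter> A) \<and> Q2 (F \<inter> B)) = om_prob A p Q1 * om_prob B p Q2"
proof -
  let ?g = "\<lambda>F. if Q1 (F \<inter> A) \<and> Q2 (F \<inter> B) then p ^ card F * (1 - p) ^ (card (A \<union> B) - card F) else 0"
  have bij: "bij_betw (\<lambda>x. fst x \<union> snd x) (Pow A \<times> Pow B) (Pow (A \<union> B))"
  proof (rule bij_betw_byWitness[where f'="\<lambda>F. (F \<inter> A, F \<inter> B)"])
  qed (use D in auto)
  have "om_prob A p Q1 * om_prob B p Q2 =
     (\<Sum>(F1,F2)\<in>Pow A \<times> Pow B. (if Q1 F1 then p ^ card F1 * (1 - p) ^ (card A - card F1) else 0)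
        * (if Q2 F2 then p ^ card F2 * (1 - p) ^ (card B - card F2) else 0))"
    by (simp add: om_prob_def sum_product sum.cartesian_product)
  also have "\<dots> = (\<Sum>x\<in>Pow A \<times> Pow B. ?g (fst x \<union> snd x))"
  proof -
    have pw: "(if Q1 F1 then p ^ card F1 * (1 - p) ^ (card A - card F1) else 0) *
         (if Q2 F2 then p ^ card F2 * (1 - p) ^ (card B - card F2) else 0) = ?g (F1 \<union> F2)"
      if s: "F1 \<subseteq> A" "F2 \<subseteq> B" for F1 F2
    proof -
    have f: "finite F1" "finite F2" using s A B finite_subset by auto
    have i1: "(F1 \<union> F2) \<inter> A = F1" "(F1 \<union> F2) \<inter> B = F2" using s D by auto
    have c1: "card (F1 \<union> F2) = card F1 + card F2" using f s D by (subst card_Un_disjoint) auto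
    have c2: "card (A \<union> B) = card A + card B" using A B D by (simp add: card_Un_disjoint)
    have c3: "card F1 \<le> card A" "card F2 \<le> card B" using s A B by (auto intro: card_mono)
    have "card A + card B - (card F1 + card F2) = (card A - card F1) + (card B - card F2)" using c3 by simp
    thus ?thesis
      using i1 c1 c2 by (simp add: power_add mult_ac)
    qed
    show ?thesis by (intro sum.cong refl) (auto simp: pw)
  qed
  also have "\<dots> = sum ?g (Pow (A \<union> B))"
    by (rule sum.reindex_bij_betw[OF bij])
  finally show ?thesis by (simp add: om_prob_def)
qed

lemma om_prob_True: "finite A \<Longrightarrow> om_prob A p (\<lambda>_. True) = 1"
proof (induction A rule: finite_induct)
  case empty thus ?case by (simp add: om_prob_def)
next
  case (insert x A)
  have s: "om_prob {x} p (\<lambda>_. True) = 1"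
  proof -
    have "Pow {x} = {{}, {x}}" by auto
    thus ?thesis by (simp add: om_prob_def)
  qed
  have "om_prob (insert x A) p (\<lambda>_. True) = om_prob ({x} \<union> A) p (\<lambda>F. (\<lambda>_. True) (F \<inter> {x}) \<and> (\<lambda>_. True) (F \<inter> A))"
    by simp
  also have "\<dots> = 1" using insert s by (subst om_prob_split) auto
  finally show ?case .
qed

lemma om_prob_all: "finite A \<Longrightarrow> om_prob A p (\<lambda>F. F = A) = p ^ card A"
  unfolding om_prob_def by (simp add: sum.delta')

lemma om_prob_subset:
  assumes "finite V'" "S \<subseteq> V'"
  shows "om_prob V' p (\<lambda>F. S \<subseteq> F) = p ^ card S"
proof -
  have fin: "finite S" "finite (V' - S)" using assms finite_subset by auto
  have eq: "S \<union> (V' - S) = V'" using assms by auto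
  have "om_prob V' p (\<lambda>F. S \<subseteq> F) = om_prob (S \<union> (V' - S)) p (\<lambda>F. (\<lambda>G. G = S) (F \<inter> S) \<and> (\<lambda>_. True) (F \<inter> (V' - S)))"
    unfolding eq by (rule om_prob_cong) auto
  also have "\<dots> = p ^ card S" using fin by (subst om_prob_split) (auto simp: om_prob_True om_prob_all)
  finally show ?thesis .
qed

lemma om_prob_compl:
  assumes "finite V'"
  shows "om_prob V' p (\<lambda>F. \<not> Q F) = 1 - om_prob V' p Q"
proof -
  have "om_prob V' p (\<lambda>F. \<not> Q F) + om_prob V' p Q = om_prob V' p (\<lambda>_. True)"
    unfolding om_prob_def by (subst sum.distrib[symmetric]) (rule sum.cong, auto)
  thus ?thesis using om_prob_True[OF assms] by simp
qed

lemma om_prob_nonneg: "0 \<le> p \<Longrightarrow> p \<le> 1 \<Longrightarrow> 0 \<le> om_prob V' p Q"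
  unfolding om_prob_def by (intro sum_nonneg) auto

lemma om_prob_mono:
  assumes "0 \<le> p" "p \<le> 1" "\<And>F. F \<subseteq> V' \<Longrightarrow> Q F \<Longrightarrow> Q' F"
  shows "om_prob V' p Q \<le> om_prob V' p Q'"
  unfolding om_prob_def by (intro sum_mono) (use assms in auto)

lemma om_prob_le1: "finite V' \<Longrightarrow> 0 \<le> p \<Longrightarrow> p \<le> 1 \<Longrightarrow> om_prob V' p Q \<le> 1"
  using om_prob_mono[of p V' Q "\<lambda>_. True"] om_prob_True[of V' p] by auto

lemma om_prob_union2:
  assumes "0 \<le> p" "p \<le> 1"
  shows "om_prob V' p (\<lambda>F. Q F \<or> Q' F) \<le> om_prob V' p Q + om_prob V' p Q'"
  unfolding om_prob_def by (subst sum.distrib[symmetric], intro sum_mono) (use assms in auto)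

lemma om_prob_union:
  assumes "0 \<le> p" "p \<le> 1" "finite J"
  shows "om_prob V' p (\<lambda>F. \<exists>j\<in>J. Q j F) \<le> (\<Sum>j\<in>J. om_prob V' p (Q j))"
  using assms(3)
proof (induction J rule: finite_induct)
  case empty thus ?case by (simp add: om_prob_def)
next
  case (insert a J)
  have "om_prob V' p (\<lambda>F. \<exists>j\<in>insert a J. Q j F) = om_prob V' p (\<lambda>F. Q a F \<or> (\<exists>j\<in>J. Q j F))" by simp
  also have "\<dots> \<le> om_prob V' p (Q a) + om_prob V' p (\<lambda>F. \<exists>j\<in>J. Q j F)" by (rule om_prob_union2[OF assms(1,2)])
  also have "\<dots> \<le> om_prob V' p (Q a) + (\<Sum>j\<in>J. om_prob V' p (Q j))" using insert by simp
  finally show ?case using insert by simp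
qed

lemma om_prob_prod:
  assumes "finite D" "finite L"
  shows "om_prob (D \<times> L) p (\<lambda>F. \<forall>v\<in>D. \<not> {v} \<times> L \<subseteq> F) = (1 - p ^ card L) ^ card D"
  using assms(1)
proof (induction D rule: finite_induct)
  case empty thus ?case by (simp add: om_prob_def)
next
  case (insert v D)
  have fin: "finite ({v} \<times> L)" "finite (D \<times> L)" using assms insert by auto
  have s: "om_prob ({v} \<times> L) p (\<lambda>G. \<not> {v} \<times> L \<subseteq> G) = 1 - p ^ card L"
    using om_prob_compl[OF fin(1)] om_prob_subset[OF fin(1) order_refl] by (simp add: card_cartesian_product)
  have "om_prob (insert v D \<times> L) p (\<lambda>F. \<forall>v'\<in>insert v D. \<not> {v'} \<times> L \<subseteq> F)
      = om_prob ({v} \<times> L \<union> D \<times> L) p (\<lambda>F. (\<lambda>G. \<not> {v} \<times> L \<subseteq> G) (F \<inter> ({v} \<times> L)) \<and>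
            (\<lambda>G. \<forall>v'\<in>D. \<not> {v'} \<times> L \<subseteq> G) (F \<inter> (D \<times> L)))"
  proof -
    have eq: "insert v D \<times> L = {v} \<times> L \<union> D \<times> L" by auto
    show ?thesis unfolding eq by (rule om_prob_cong) auto
  qed
  also have "\<dots> = (1 - p ^ card L) * (1 - p ^ card L) ^ card D"
    using fin insert s by (subst om_prob_split) auto
  finally show ?case using insert by simp
qed




lemma snd_run'_Suc:
  "snd (run' A E P l env F om (Suc t) c) \<longleftrightarrow> snd (run' A E P l env F om t c) \<and>
     (\<forall>u. (u, fst c) \<in> E \<longrightarrow> (\<exists>d. fst d = u \<and> ((d, c) \<in> reinf_edges E P l \<and> snd (run' A E P l env F om t d) \<and> \<not> (d \<in> F \<and> om t d c))))"
  by (simp add: Let_def)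

lemma run'_correct:
  "snd (run' A E P l env F om t c) \<Longrightarrow> fst (run' A E P l env F om t c) = run A E env t (fst c)"
proof (induction t arbitrary: c)
  case 0 thus ?case by simp
next
  case (Suc t)
  let ?st = "\<lambda>d. run' A E P l env F om t d"
  let ?del = "\<lambda>d. (d, c) \<in> reinf_edges E P l \<and> snd (?st d) \<and> \<not> (d \<in> F \<and> om t d c)"
  have cond: "snd (?st c) \<and> (\<forall>u. (u, fst c) \<in> E \<longrightarrow> (\<exists>d. fst d = u \<and> ?del d))"
    using Suc.prems snd_run'_Suc by metis
  have eq: "fst (run' A E P l env F om (Suc t) c) =
     a_update A (fst c) (a_input A (fst c) (fst (?st c)) (env t (fst c)))
       (\<lambda>u. if (u, fst c) \<in> E then a_send A (fst (SOME d. fst d = u \<and> ?del d))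
          (a_input A (fst (SOME d. fst d = u \<and> ?del d)) (fst (?st (SOME d. fst d = u \<and> ?del d)))
             (env t (fst (SOME d. fst d = u \<and> ?del d)))) (fst c) else None)"
    unfolding run'.simps(2) Let_def by (subst if_P[OF cond], simp only: fst_conv)
  have msgs: "(\<lambda>u. if (u, fst c) \<in> E then a_send A (fst (SOME d. fst d = u \<and> ?del d))
          (a_input A (fst (SOME d. fst d = u \<and> ?del d)) (fst (?st (SOME d. fst d = u \<and> ?del d)))
             (env t (fst (SOME d. fst d = u \<and> ?del d)))) (fst c) else None)
     = (\<lambda>u. if (u, fst c) \<in> E then a_send A u (a_input A u (run A E env t u) (env t u)) (fst c) else None)"
  proof
    fix u
    show "(if (u, fst c) \<in> E then a_send A (fst (SOME d. fst d = u \<and> ?del d))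
          (a_input A (fst (SOME d. fst d = u \<and> ?del d)) (fst (?st (SOME d. fst d = u \<and> ?del d)))
             (env t (fst (SOME d. fst d = u \<and> ?del d)))) (fst c) else None)
      = (if (u, fst c) \<in> E then a_send A u (a_input A u (run A E env t u) (env t u)) (fst c) else None)"
    proof (cases "(u, fst c) \<in> E")
      case True
      then obtain d where "fst d = u \<and> ?del d" using cond by blast
      hence s: "fst (SOME d. fst d = u \<and> ?del d) = u \<and> ?del (SOME d. fst d = u \<and> ?del d)"
        by (rule someI)
      hence "fst (?st (SOME d. fst d = u \<and> ?del d)) = run A E env t u" using Suc.IH[of "SOME d. fst d = u \<and> ?del d"] by simp
      thus ?thesis using s True by simp
    qed simp
  qed
  have h: "fst (?st c) = run A E env t (fst c)" using Suc.IH cond by blast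
  show ?case unfolding eq msgs h by (simp add: Let_def)
qed

lemma partition_unique:
  "partition_on V P \<Longrightarrow> X \<in> P \<Longrightarrow> Y \<in> P \<Longrightarrow> v \<in> X \<Longrightarrow> v \<in> Y \<Longrightarrow> X = Y"
  unfolding partition_on_def pairwise_def disjnt_def by blast

lemma good_sim:
  assumes gp: "graph_part V E P"
    and good: "\<forall>X\<in>P. \<exists>i\<in>{1..l}. \<forall>x\<in>X. (x, i) \<notin> F"
  shows "simulates A V E P l env F om"
proof -
  have part: "partition_on V P" and EV: "E \<subseteq> V \<times> V" using gp by (auto simp: graph_part_def)
  define reg where "reg v = (SOME X. X \<in> P \<and> v \<in> X)" for v
  define idx where "idx X = (SOME i. i \<in> {1..l} \<and> (\<forall>x\<in>X. (x, i) \<notin> F))" for X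
  have reg: "reg v \<in> P \<and> v \<in> reg v" if "v \<in> V" for v
  proof -
    have "\<exists>X. X \<in> P \<and> v \<in> X" using part that unfolding partition_on_def by blast
    thus ?thesis unfolding reg_def by (rule someI_ex)
  qed
  have idx: "idx X \<in> {1..l} \<and> (\<forall>x\<in>X. (x, idx X) \<notin> F)" if "X \<in> P" for X
  proof -
    have "\<exists>i. i \<in> {1..l} \<and> (\<forall>x\<in>X. (x, i) \<notin> F)" using good that by blast
    thus ?thesis unfolding idx_def by (rule someI_ex)
  qed
  have know: "\<forall>v\<in>V. snd (run' A E P l env F om t (v, idx (reg v)))" for t
  proof (induction t)
    case 0 thus ?case by simp
  next
    case (Suc t)
    show ?case
    proof
      fix v assume v: "v \<in> V"
      have "\<exists>d. fst d = u \<and> ((d, (v, idx (reg v))) \<in> reinf_edges E P l \<and> snd (run' A E P l env F om t d)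
                \<and> \<not> (d \<in> F \<and> om t d (v, idx (reg v))))" if uv: "(u, v) \<in> E" for u
      proof (intro exI conjI)
        have u: "u \<in> V" using uv EV by auto
        show "fst (u, idx (reg u)) = u" by simp
        show "snd (run' A E P l env F om t (u, idx (reg u)))" using Suc u by blast
        show "\<not> ((u, idx (reg u)) \<in> F \<and> om t (u, idx (reg u)) (v, idx (reg v)))"
          using idx[OF reg[OF u, THEN conjunct1]] reg[OF u] by blast
        have same: "same_region P u v \<Longrightarrow> reg u = reg v"
          unfolding same_region_def using reg[OF u] reg[OF v] partition_unique[OF part] by metis
        show "((u, idx (reg u)), (v, idx (reg v))) \<in> reinf_edges E P l"
          unfolding reinf_edges_def using uv same idx[OF reg[OF u, THEN conjunct1]] idx[OF reg[OF v, THEN conjunct1]]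
          by auto
      qed
      thus "snd (run' A E P l env F om (Suc t) (v, idx (reg v)))"
        unfolding snd_run'_Suc fst_conv using Suc v by blast
    qed
  qed
  show ?thesis unfolding simulates_def
  proof
    fix v assume v: "v \<in> V"
    show "\<exists>i\<in>{1..l}. \<forall>t. snd (run' A E P l env F om t (v, i)) \<and> fst (run' A E P l env F om t (v, i)) = run A E env t v"
    proof (intro bexI allI conjI)
      fix t
      show k: "snd (run' A E P l env F om t (v, idx (reg v)))" using know v by blast
      show "fst (run' A E P l env F om t (v, idx (reg v))) = run A E env t v"
        using run'_correct[OF k] by simp
    qed (use idx[OF reg[OF v, THEN conjunct1]] in blast)
  qed
qed

lemma bad_not_sim:
  assumes "(v, w) \<in> E" "w \<in> V" "\<forall>j\<in>{1..l}. (v, j) \<in> F"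
  shows "\<not> simulates A V E P l env F (\<lambda>t d c. True)"
proof
  assume "simulates A V E P l env F (\<lambda>t d c. True)"
  then obtain i where "snd (run' A E P l env F (\<lambda>t d c. True) (Suc 0) (w, i))"
    using assms(2) unfolding simulates_def by blast
  hence "\<exists>d. fst d = v \<and> (d, (w, i)) \<in> reinf_edges E P l \<and> \<not> d \<in> F"
    using assms(1) unfolding snd_run'_Suc by auto
  then obtain d where "fst d = v" "(d, (w, i)) \<in> reinf_edges E P l" "d \<notin> F" by blast
  thus False using assms(3) unfolding reinf_edges_def by auto
qed




lemma q_bound:
  fixes n r R c p :: real and f :: nat
  assumes n: "n \<ge> 1" and r: "r \<ge> 1" and rR: "r \<le> R" and c: "c \<ge> 0" and p: "0 \<le> p"
    and pq: "p \<le> c * ((n / r) powr (- 1 / real (f + 1)) / R)"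
  shows "n * R ^ f * p ^ (f + 1) \<le> c ^ (f + 1)"
proof -
  let ?q = "(n / r) powr (- 1 / real (f + 1)) / R"
  have R: "R > 0" using r rR by simp
  have x: "n / r > 0" using n r by simp
  have pos: "(n / r) powr (- 1 / real (f + 1)) > 0" using x n r by simp
  have "((n / r) powr (- 1 / real (f + 1))) ^ (f + 1) = ((n / r) powr (- 1 / real (f + 1))) powr (real (f + 1))"
    by (rule powr_realpow[OF pos, symmetric])
  also have "\<dots> = (n / r) powr (- 1 / real (f + 1) * real (f + 1))" by (rule powr_powr)
  also have "- 1 / real (f + 1) * real (f + 1) = - 1" by simp
  also have "(n / r) powr (- 1) = inverse ((n / r) powr 1)" by (rule powr_minus)
  also have "\<dots> = r / n" using x n r by simp
  finally have qp: "?q ^ (f + 1) = (r / n) / R ^ (f + 1)" by (simp add: power_divide)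
  have "p ^ (f + 1) \<le> (c * ?q) ^ (f + 1)" using p pq by (intro power_mono) auto
  also have "\<dots> = c ^ (f + 1) * ((r / n) / R ^ (f + 1))" unfolding power_mult_distrib qp by (rule refl)
  finally have "n * R ^ f * p ^ (f + 1) \<le> n * R ^ f * (c ^ (f + 1) * ((r / n) / R ^ (f + 1)))"
    using n R by (intro mult_left_mono) auto
  also have "\<dots> = c ^ (f + 1) * (r / R)" using n R by (simp add: field_simps)
  also have "\<dots> \<le> c ^ (f + 1)"
  proof -
    have "r / R \<le> 1" using R rR by simp
    from mult_left_le[OF this, of "c ^ (f + 1)"] show ?thesis using c by simp
  qed
  finally show ?thesis .
qed

lemma part1_bound:
  assumes gp: "graph_part V E P" and V: "V \<noteq> {}" and p: "0 \<le> p" "p \<le> 1"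
  shows "1 - real (card V) * real (max_region P) ^ f * p ^ (f + 1)
       \<le> om_prob (V \<times> {1..f + 1}) p (\<lambda>F. \<forall>om. simulates A V E P (f + 1) env F om)"
proof -
  let ?L = "{1..f + 1}"
  let ?V' = "V \<times> ?L"
  have fin: "finite V" and part: "partition_on V P" using gp by (auto simp: graph_part_def)
  have finP: "finite P" using part fin
    by (metis finite_UnionD partition_on_def)
  have finX: "\<And>X. X \<in> P \<Longrightarrow> finite X" using part fin
    unfolding partition_on_def by (meson Union_upper finite_subset)
  have XV: "\<And>X. X \<in> P \<Longrightarrow> X \<subseteq> V" using part by (auto simp: partition_on_def)
  have finV': "finite ?V'" using fin by simp
  define J where "J = Sigma P (\<lambda>X. PiE ?L (\<lambda>_. X))"
  define S where "S j = (\<lambda>i. (snd j i, i)) ` ?L" for j :: "'a set \<times> (nat \<Rightarrow> 'a)"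
  have finJ: "finite J" unfolding J_def using finP finX by (auto intro!: finite_PiE)
  have bad: "\<exists>j\<in>J. S j \<subseteq> F" if nb: "\<not> (\<forall>X\<in>P. \<exists>i\<in>?L. \<forall>x\<in>X. (x, i) \<notin> F)" for F
  proof -
    obtain X where X: "X \<in> P" "\<forall>i\<in>?L. \<exists>x\<in>X. (x, i) \<in> F" using nb by blast
    define g where "g = restrict (\<lambda>i. SOME x. x \<in> X \<and> (x, i) \<in> F) ?L"
    have g: "g i \<in> X \<and> (g i, i) \<in> F" if "i \<in> ?L" for i
    proof -
      have e: "\<exists>x. x \<in> X \<and> (x, i) \<in> F" using X(2) that by blast
      have "g i = (SOME x. x \<in> X \<and> (x, i) \<in> F)" using that by (simp add: g_def)
      thus ?thesis using someI_ex[OF e] by simp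
    qed
    have "(X, g) \<in> J" unfolding J_def using X g by (auto simp: g_def)
    moreover have "S (X, g) \<subseteq> F" unfolding S_def using g by auto
    ultimately show ?thesis by blast
  qed
  have SV: "S j \<subseteq> ?V'" if "j \<in> J" for j
    using that XV unfolding J_def S_def by (fastforce simp: PiE_def Pi_def)
  have cardS: "card (S j) = f + 1" for j
    unfolding S_def by (subst card_image) (auto simp: inj_on_def)
  have "om_prob ?V' p (\<lambda>F. \<not> (\<forall>X\<in>P. \<exists>i\<in>?L. \<forall>x\<in>X. (x, i) \<notin> F))
      \<le> om_prob ?V' p (\<lambda>F. \<exists>j\<in>J. S j \<subseteq> F)"
    using p bad by (intro om_prob_mono) auto
  also have "\<dots> \<le> (\<Sum>j\<in>J. om_prob ?V' p (\<lambda>F. S j \<subseteq> F))"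
    using p finJ by (rule om_prob_union)
  also have "\<dots> = (\<Sum>j\<in>J. p ^ (f + 1))"
    using om_prob_subset[OF finV' SV] cardS by simp
  also have "\<dots> = (\<Sum>X\<in>P. real (card X) ^ (f + 1) * p ^ (f + 1))"
  proof -
    have "card J = (\<Sum>X\<in>P. card X ^ (f + 1))" unfolding J_def using finP finX
      by (simp add: card_SigmaI card_PiE finite_PiE)
    thus ?thesis by (simp add: sum_distrib_right)
  qed
  also have "\<dots> \<le> (\<Sum>X\<in>P. real (card X) * real (max_region P) ^ f * p ^ (f + 1))"
  proof (intro sum_mono mult_right_mono)
    fix X assume X: "X \<in> P"
    have "card X \<le> max_region P" unfolding max_region_def using X finP by auto
    hence "real (card X) ^ f \<le> real (max_region P) ^ f" by (intro power_mono) auto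
    thus "real (card X) ^ (f + 1) \<le> real (card X) * real (max_region P) ^ f"
      by (simp add: mult_left_mono)
  qed (use p in auto)
  also have "\<dots> = real (card V) * real (max_region P) ^ f * p ^ (f + 1)"
  proof -
    have "card V = (\<Sum>X\<in>P. card X)"
      using part finX unfolding partition_on_def by (metis card_Union_disjoint)
    thus ?thesis by (simp add: sum_distrib_right)
  qed
  finally have b: "om_prob ?V' p (\<lambda>F. \<not> (\<forall>X\<in>P. \<exists>i\<in>?L. \<forall>x\<in>X. (x, i) \<notin> F))
      \<le> real (card V) * real (max_region P) ^ f * p ^ (f + 1)" .
  have "om_prob ?V' p (\<lambda>F. \<forall>X\<in>P. \<exists>i\<in>?L. \<forall>x\<in>X. (x, i) \<notin> F)
     \<le> om_prob ?V' p (\<lambda>F. \<forall>om. simulates A V E P (f + 1) env F om)"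
    using p good_sim[OF gp] by (intro om_prob_mono) auto
  thus ?thesis using b om_prob_compl[OF finV', of p "\<lambda>F. \<forall>X\<in>P. \<exists>i\<in>?L. \<forall>x\<in>X. (x, i) \<notin> F"]
    by linarith
qed

lemma part2_bound:
  assumes gp: "graph_part V E P" and p: "0 \<le> p" "p \<le> 1"
  shows "1 - (1 - p ^ l) ^ card {v \<in> V. \<exists>w. (v, w) \<in> E}
       \<le> om_prob (V \<times> {1..l}) p (\<lambda>F. \<not> simulates A V E P l env F (\<lambda>t d c. True))"
proof -
  let ?L = "{1..l}"
  let ?D = "{v \<in> V. \<exists>w. (v, w) \<in> E}"
  have fin: "finite V" and EV: "E \<subseteq> V \<times> V" using gp by (auto simp: graph_part_def)
  have finD: "finite ?D" using fin by simp
  have finV': "finite (V \<times> ?L)" using fin by simp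
  have eq: "V \<times> ?L = ?D \<times> ?L \<union> (V \<times> ?L - ?D \<times> ?L)" by auto
  have "om_prob (V \<times> ?L) p (\<lambda>F. \<forall>v\<in>?D. \<not> {v} \<times> ?L \<subseteq> F)
     = om_prob (?D \<times> ?L \<union> (V \<times> ?L - ?D \<times> ?L)) p
        (\<lambda>F. (\<lambda>G. \<forall>v\<in>?D. \<not> {v} \<times> ?L \<subseteq> G) (F \<inter> (?D \<times> ?L)) \<and> (\<lambda>_. True) (F \<inter> (V \<times> ?L - ?D \<times> ?L)))"
    by (subst eq[symmetric], rule om_prob_cong) auto
  also have "\<dots> = (1 - p ^ l) ^ card ?D"
  proof -
    have pr: "om_prob (?D \<times> ?L) p (\<lambda>G. \<forall>v\<in>?D. \<not> {v} \<times> ?L \<subseteq> G) = (1 - p ^ card ?L) ^ card ?D"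
      by (rule om_prob_prod[OF finD]) simp
    have t: "om_prob (V \<times> ?L - ?D \<times> ?L) p (\<lambda>_. True) = 1" using fin by (intro om_prob_True) simp
    have "om_prob (?D \<times> ?L \<union> (V \<times> ?L - ?D \<times> ?L)) p
        (\<lambda>F. (\<lambda>G. \<forall>v\<in>?D. \<not> {v} \<times> ?L \<subseteq> G) (F \<inter> (?D \<times> ?L)) \<and> (\<lambda>_. True) (F \<inter> (V \<times> ?L - ?D \<times> ?L)))
      = om_prob (?D \<times> ?L) p (\<lambda>G. \<forall>v\<in>?D. \<not> {v} \<times> ?L \<subseteq> G) * om_prob (V \<times> ?L - ?D \<times> ?L) p (\<lambda>_. True)"
      by (rule om_prob_split) (use fin in auto)
    thus ?thesis using pr t by simp
  qed
  finally have a: "om_prob (V \<times> ?L) p (\<lambda>F. \<forall>v\<in>?D. \<not> {v} \<times> ?L \<subseteq> F) = (1 - p ^ l) ^ card ?D" .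
  have "om_prob (V \<times> ?L) p (\<lambda>F. \<not> (\<forall>v\<in>?D. \<not> {v} \<times> ?L \<subseteq> F))
     \<le> om_prob (V \<times> ?L) p (\<lambda>F. \<not> simulates A V E P l env F (\<lambda>t d c. True))"
  proof (rule om_prob_mono[OF p])
    fix F assume "\<not> (\<forall>v\<in>?D. \<not> {v} \<times> ?L \<subseteq> F)"
    then obtain v w where "(v, w) \<in> E" "{v} \<times> ?L \<subseteq> F" by blast
    moreover hence "w \<in> V" using EV by auto
    ultimately show "\<not> simulates A V E P l env F (\<lambda>t d c. True)"
      by (intro bad_not_sim) auto
  qed
  thus ?thesis using a om_prob_compl[OF finV', of p "\<lambda>F. \<forall>v\<in>?D. \<not> {v} \<times> ?L \<subseteq> F"] by linarith
qed




lemma lim1: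
  assumes "\<And>e. e > 0 \<Longrightarrow> eventually (\<lambda>m. 1 - e < X m \<and> X m \<le> (1::real)) sequentially"
  shows "X \<longlonglongrightarrow> 1"
  unfolding tendsto_iff
proof (intro allI impI)
  fix e :: real assume "e > 0"
  from assms[OF this] show "eventually (\<lambda>m. dist (X m) 1 < e) sequentially"
    by (rule eventually_mono) (auto simp: dist_real_def)
qed

lemma powr_inv_pow:
  fixes x :: real assumes x: "x > 0"
  shows "(x powr (- 1 / real (f + 1))) ^ (f + 1) = 1 / x"
proof -
  have pos: "x powr (- 1 / real (f + 1)) > 0" using x by simp
  have "(x powr (- 1 / real (f + 1))) ^ (f + 1) = (x powr (- 1 / real (f + 1))) powr (real (f + 1))"
    by (rule powr_realpow[OF pos, symmetric])
  also have "\<dots> = x powr (- 1 / real (f + 1) * real (f + 1))" by (rule powr_powr)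
  also have "- 1 / real (f + 1) * real (f + 1) = - 1" by simp
  also have "x powr (- 1) = inverse (x powr 1)" by (rule powr_minus)
  also have "\<dots> = 1 / x" using x by (simp add: divide_inverse)
  finally show ?thesis .
qed

lemma region_facts:
  assumes gp: "graph_part V E P" and V: "V \<noteq> {}"
  shows "1 \<le> min_region P \<and> min_region P \<le> max_region P"
proof -
  have fin: "finite V" and part: "partition_on V P" using gp by (auto simp: graph_part_def)
  have finP: "finite P" using part fin by (metis finite_UnionD partition_on_def)
  have finX: "\<And>X. X \<in> P \<Longrightarrow> finite X" using part fin
    unfolding partition_on_def by (meson Union_upper finite_subset)
  have ne: "\<And>X. X \<in> P \<Longrightarrow> X \<noteq> {}" using part by (auto simp: partition_on_def)
  obtain X where X: "X \<in> P" using part V by (auto simp: partition_on_def)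
  have c1: "\<And>X. X \<in> P \<Longrightarrow> 1 \<le> card X" using finX ne by (simp add: Suc_leI card_gt_0_iff)
  have "1 \<le> min_region P" unfolding min_region_def using finP X c1 by (subst Min_ge_iff) auto
  moreover have "min_region P \<le> card X" unfolding min_region_def using finP X by auto
  moreover have "card X \<le> max_region P" unfolding max_region_def using finP X by auto
  ultimately show ?thesis by linarith
qed

theorem theorem3:
  fixes f :: nat
  shows
  "(\<forall>(V :: nat \<Rightarrow> 'v set) E P (p :: nat \<Rightarrow> real) (A :: nat \<Rightarrow> ('v,'s,'m,'i) alg) env.
      (\<forall>m. graph_part (V m) (E m) (P m)) \<and>
      filterlim (\<lambda>m. card (V m)) at_top sequentially \<and>
      (\<forall>m. 0 \<le> p m \<and> p m \<le> 1) \<and>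
      p \<in> o(\<lambda>m. (real (card (V m)) / real (min_region (P m))) powr (- 1 / real (f + 1))
                 / real (max_region (P m)))
      \<longrightarrow> ((\<lambda>m. om_prob (V m \<times> {1..f + 1}) (p m)
                 (\<lambda>F. \<forall>om. simulates (A m) (V m) (E m) (P m) (f + 1) (env m) F om))
           \<longlonglongrightarrow> 1))
   \<and>
   (\<forall>(V :: nat \<Rightarrow> 'v set) E P (p :: nat \<Rightarrow> real).
      (\<forall>m. graph_part (V m) (E m) (P m)) \<and>
      filterlim (\<lambda>m. card (V m)) at_top sequentially \<and>
      (\<forall>m. 0 \<le> p m \<and> p m \<le> 1) \<and>
      (\<lambda>m. real (card {v \<in> V m. \<exists>w. (v, w) \<in> E m})) \<in> \<Omega>(\<lambda>m. real (card (V m))) \<and>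
      (\<lambda>m. real (max_region (P m))) \<in> O(\<lambda>_. 1) \<and>
      p \<in> \<omega>(\<lambda>m. real (card (V m)) powr (- 1 / real (f + 1)))
      \<longrightarrow> (\<exists>(A :: nat \<Rightarrow> ('v,'s,'m,'i) alg) env om.
             (\<lambda>m. om_prob (V m \<times> {1..f + 1}) (p m)
                 (\<lambda>F. \<not> simulates (A m) (V m) (E m) (P m) (f + 1) (env m) F (om m)))
             \<longlonglongrightarrow> 1))"
proof (intro conjI allI impI)
  fix V :: "nat \<Rightarrow> 'v set" and E P and p :: "nat \<Rightarrow> real" and A :: "nat \<Rightarrow> ('v,'s,'m,'i) alg" and env
  assume H: "(\<forall>m. graph_part (V m) (E m) (P m)) \<and>
      filterlim (\<lambda>m. card (V m)) at_top sequentially \<and>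
      (\<forall>m. 0 \<le> p m \<and> p m \<le> 1) \<and>
      p \<in> o(\<lambda>m. (real (card (V m)) / real (min_region (P m))) powr (- 1 / real (f + 1))
                 / real (max_region (P m)))"
  hence gp: "\<And>m. graph_part (V m) (E m) (P m)" and lim: "filterlim (\<lambda>m. card (V m)) at_top sequentially"
    and pr: "\<And>m. 0 \<le> p m \<and> p m \<le> 1"
    and sm: "p \<in> o(\<lambda>m. (real (card (V m)) / real (min_region (P m))) powr (- 1 / real (f + 1))
                 / real (max_region (P m)))" by auto
  have evn: "eventually (\<lambda>m. 1 \<le> card (V m)) sequentially" using lim by (simp add: filterlim_at_top)
  show "(\<lambda>m. om_prob (V m \<times> {1..f + 1}) (p m)
                 (\<lambda>F. \<forall>om. simulates (A m) (V m) (E m) (P m) (f + 1) (env m) F om)) \<longlonglongrightarrow> 1"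
  proof (rule lim1)
    fix e :: real assume e: "e > 0"
    define c where "c = min 1 (e / 2)"
    have c: "c > 0" "c \<le> 1" "c < e" using e by (auto simp: c_def)
    from landau_o.smallD[OF sm c(1)] evn
    show "eventually (\<lambda>m. 1 - e < om_prob (V m \<times> {1..f + 1}) (p m)
                 (\<lambda>F. \<forall>om. simulates (A m) (V m) (E m) (P m) (f + 1) (env m) F om) \<and>
           om_prob (V m \<times> {1..f + 1}) (p m)
                 (\<lambda>F. \<forall>om. simulates (A m) (V m) (E m) (P m) (f + 1) (env m) F om) \<le> 1) sequentially"
    proof eventually_elim
      case (elim m)
      have Vne: "V m \<noteq> {}" using elim(2) by auto
      have fin: "finite (V m)" using gp by (simp add: graph_part_def)
      have rf: "1 \<le> min_region (P m) \<and> min_region (P m) \<le> max_region (P m)" using region_facts[OF gp Vne] .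
      have qpos: "(real (card (V m)) / real (min_region (P m))) powr (- 1 / real (f + 1))
                 / real (max_region (P m)) > 0" using rf elim(2) by simp
      have pq: "p m \<le> c * ((real (card (V m)) / real (min_region (P m))) powr (- 1 / real (f + 1))
                 / real (max_region (P m)))" using elim(1) qpos pr[of m] by simp
      have b1: "real (card (V m)) * real (max_region (P m)) ^ f * p m ^ (f + 1) \<le> c ^ (f + 1)"
        using rf elim(2) c pr[of m] by (intro q_bound[OF _ _ _ _ _ pq]) auto
      have "c ^ (f + 1) \<le> c" using c by (simp add: mult_left_le power_le_one)
      hence "1 - e < om_prob (V m \<times> {1..f + 1}) (p m)
                 (\<lambda>F. \<forall>om. simulates (A m) (V m) (E m) (P m) (f + 1) (env m) F om)"
        using part1_bound[OF gp Vne, of "p m" f "A m" "env m"] pr[of m] b1 c by linarith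
      moreover have "om_prob (V m \<times> {1..f + 1}) (p m)
                 (\<lambda>F. \<forall>om. simulates (A m) (V m) (E m) (P m) (f + 1) (env m) F om) \<le> 1"
        using fin pr[of m] by (intro om_prob_le1) auto
      ultimately show ?case by blast
    qed
  qed
next
  fix V :: "nat \<Rightarrow> 'v set" and E P and p :: "nat \<Rightarrow> real"
  assume H: "(\<forall>m. graph_part (V m) (E m) (P m)) \<and>
      filterlim (\<lambda>m. card (V m)) at_top sequentially \<and>
      (\<forall>m. 0 \<le> p m \<and> p m \<le> 1) \<and>
      (\<lambda>m. real (card {v \<in> V m. \<exists>w. (v, w) \<in> E m})) \<in> \<Omega>(\<lambda>m. real (card (V m))) \<and>
      (\<lambda>m. real (max_region (P m))) \<in> O(\<lambda>_. 1) \<and>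
      p \<in> \<omega>(\<lambda>m. real (card (V m)) powr (- 1 / real (f + 1)))"
  hence gp: "\<And>m. graph_part (V m) (E m) (P m)" and lim: "filterlim (\<lambda>m. card (V m)) at_top sequentially"
    and pr: "\<And>m. 0 \<le> p m \<and> p m \<le> 1"
    and Om: "(\<lambda>m. real (card {v \<in> V m. \<exists>w. (v, w) \<in> E m})) \<in> \<Omega>(\<lambda>m. real (card (V m)))"
    and om: "p \<in> \<omega>(\<lambda>m. real (card (V m)) powr (- 1 / real (f + 1)))" by auto
  have evn: "eventually (\<lambda>m. 1 \<le> card (V m)) sequentially" using lim by (simp add: filterlim_at_top)
  obtain C where C: "C > 0" and evC: "eventually (\<lambda>m. norm (real (card {v \<in> V m. \<exists>w. (v, w) \<in> E m}))
       \<ge> C * norm (real (card (V m)))) sequentially"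
    using landau_omega.bigE[OF Om] by blast
  let ?A = "\<lambda>m::nat. undefined :: ('v,'s,'m,'i) alg"
  let ?env = "\<lambda>m::nat. undefined :: nat \<Rightarrow> 'v \<Rightarrow> 'i"
  let ?om = "\<lambda>m::nat. \<lambda>(t::nat) (d::'v \<times> nat) (c::'v \<times> nat). True"
  have lim2: "(\<lambda>m. om_prob (V m \<times> {1..f + 1}) (p m)
                 (\<lambda>F. \<not> simulates (?A m) (V m) (E m) (P m) (f + 1) (?env m) F (?om m))) \<longlonglongrightarrow> 1"
  proof (rule lim1)
    fix e :: real assume e: "e > 0"
    define K where "K = \<bar>ln e\<bar> + 1"
    define c where "c = max 1 (K / C)"
    have c1: "c \<ge> 1" "K / C \<le> c" by (auto simp: c_def)
    have "K / C * C \<le> c * C" using C c1 by (intro mult_right_mono) auto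
    hence c: "c \<ge> 1" "c * C \<ge> K" using C c1 by auto
    have eK: "exp (- K) < e"
    proof -
      have "- K < ln e" unfolding K_def by linarith
      hence "exp (- K) < exp (ln e)" by simp
      thus ?thesis using e by simp
    qed
    have sc: "c > 0" using c by simp
    from landau_omega.smallD[OF om sc] evn evC
    show "eventually (\<lambda>m. 1 - e < om_prob (V m \<times> {1..f + 1}) (p m)
                 (\<lambda>F. \<not> simulates (?A m) (V m) (E m) (P m) (f + 1) (?env m) F (?om m)) \<and>
           om_prob (V m \<times> {1..f + 1}) (p m)
                 (\<lambda>F. \<not> simulates (?A m) (V m) (E m) (P m) (f + 1) (?env m) F (?om m)) \<le> 1) sequentially"
    proof eventually_elim
      case (elim m)
      let ?n = "real (card (V m))"
      let ?D = "real (card {v \<in> V m. \<exists>w. (v, w) \<in> E m})"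
      let ?x = "p m ^ (f + 1)"
      have n: "?n \<ge> 1" using elim(2) by simp
      have fin: "finite (V m)" using gp by (simp add: graph_part_def)
      have pl: "p m \<ge> c * ?n powr (- 1 / real (f + 1))" using elim(1) pr[of m] n by simp
      have "?x \<ge> (c * ?n powr (- 1 / real (f + 1))) ^ (f + 1)"
        using pl c by (intro power_mono) auto
      also have "(c * ?n powr (- 1 / real (f + 1))) ^ (f + 1) = c ^ (f + 1) / ?n"
        unfolding power_mult_distrib using powr_inv_pow[of ?n f] n by simp
      finally have xl: "?x \<ge> c ^ (f + 1) / ?n" .
      have Dl: "?D \<ge> C * ?n" using elim(3) by simp
      have "c \<le> c ^ (f + 1)" using c by (simp add: power_increasing[of 1 "f+1" c, simplified])
      have "?x * ?D \<ge> (c ^ (f + 1) / ?n) * (C * ?n)"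
        using xl Dl C n pr[of m] by (intro mult_mono) auto
      also have "(c ^ (f + 1) / ?n) * (C * ?n) = c ^ (f + 1) * C" using n by simp
      finally have xD: "?x * ?D \<ge> K"
        using \<open>c \<le> c ^ (f + 1)\<close> c C by (smt (verit) mult_right_mono)
      have x01: "0 \<le> ?x" "?x \<le> 1" using pr[of m] power_le_one[of "p m" "f + 1"] by auto
      have "(1 - ?x) ^ card {v \<in> V m. \<exists>w. (v, w) \<in> E m} \<le> exp (- ?x) ^ card {v \<in> V m. \<exists>w. (v, w) \<in> E m}"
        using x01 exp_ge_add_one_self[of "- ?x"] by (intro power_mono) auto
      also have "\<dots> = exp (?D * (- ?x))" by (rule exp_of_nat_mult[symmetric])
      also have "\<dots> \<le> exp (- K)" using xD by (simp add: mult.commute)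
      finally have "(1 - ?x) ^ card {v \<in> V m. \<exists>w. (v, w) \<in> E m} < e" using eK by linarith
      hence "1 - e < om_prob (V m \<times> {1..f + 1}) (p m)
                 (\<lambda>F. \<not> simulates (?A m) (V m) (E m) (P m) (f + 1) (?env m) F (?om m))"
        using part2_bound[OF gp[of m], where p="p m" and l="f + 1" and A="?A m" and env="?env m"] pr[of m] by linarith
      moreover have "om_prob (V m \<times> {1..f + 1}) (p m)
                 (\<lambda>F. \<not> simulates (?A m) (V m) (E m) (P m) (f + 1) (?env m) F (?om m)) \<le> 1"
        using fin pr[of m] by (intro om_prob_le1) auto
      ultimately show ?case by blast
    qed
  qed
  thus "\<exists>(A :: nat \<Rightarrow> ('v,'s,'m,'i) alg) env om.
             (\<lambda>m. om_prob (V m \<times> {1..f + 1}) (p m)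
                 (\<lambda>F. \<not> simulates (A m) (V m) (E m) (P m) (f + 1) (env m) F (om m)))
             \<longlonglongrightarrow> 1"
    by (intro exI[of _ ?A] exI[of _ ?env] exI[of _ ?om]) (use lim2 in \<open>simp only:\<close>)
qed


end
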